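(* Let $\mathscr{S}=(T,S,\sigma,\mu,\tau_T,\tau_S)$ be a relaxed scenario and $\mathscr{G}=(G_{<}(\mathscr{S}),G_{=}(\mathscr{S}),G_{>}(\mathscr{S}),\sigma)$. Then $T$ agrees with $(\mathscr{R}_T(\mathscr{G}),\mathscr{F}_T(\mathscr{G}))$ and $S$ agrees with $(\mathscr{R}_S(\mathscr{G}),\mathscr{F}_S(\mathscr{G}))$.
   Context: All trees are planted phylogenetic trees: a tree $T$ has a distinguished vertex $0_T$ of degree $1$ whose unique neighbor $\rho_T$ is the root, and every vertex other than $0_T$ and the leaves $L(T)$ has at least two children. For $x,y\in V(T)$ write $y\preceq_T x$ if $x$ lies on the path from $0_T$ to $y$; edges are written $uv$ with $v\prec_T u$. $\mathrm{lca}_T$ denotes the last common ancestor. A time map for $T$ is $\tau_T\colon V(T)\to\mathbb{R}$ with $\tau_T(x)<\tau_T(y)$ whenever $x\prec_T y$. A relaxed scenario $\mathscr{S}=(T,S,\sigma,\mu,\tau_T,\tau_S)$ consists of a gene tree $T$ with time map $\tau_T$, a species tree $S$ with time map $\tau_S$, a map $\sigma\colon L(T)\to M$ with $M\subseteq L(S)$, and a map $\mu\colon V(T)\to V(S)\cup E(S)$ such that (S0) $\mu(x)=0_S$ iff $x=0_T$; (S1) $\mu(x)\in L(S)$ iff $x\in L(T)$, in which case $\mu(x)=\sigma(x)$; (S2) if $\mu(x)\in V(S)$ then $\tau_S(\mu(x))=\tau_T(x)$; (S3) if $\mu(x)=uv\in E(S)$ then $\tau_S(v)<\tau_T(x)<\tau_S(u)$.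 The graphs $G_{=}(\mathscr{S})$, $G_{<}(\mathscr{S})$, $G_{>}(\mathscr{S})$ have vertex set $L(T)$, and for distinct $x,y$ the pair $xy$ is an edge of $G_{=}(\mathscr{S})$, $G_{<}(\mathscr{S})$, resp. $G_{>}(\mathscr{S})$ iff $\tau_T(\mathrm{lca}_T(x,y))$ is $=$, $<$, resp. $>$ than $\tau_S(\mathrm{lca}_S(\sigma(x),\sigma(y)))$. A tree displays the triple $xy|z$ if $\mathrm{lca}(x,y)\prec\mathrm{lca}(x,z)=\mathrm{lca}(y,z)$. A tree agrees with $(\mathscr{R},\mathscr{F})$ if it displays all triples of $\mathscr{R}$ and none of $\mathscr{F}$. For $\mathscr{G}=(G_<,G_=,G_>,\sigma)$ on vertex set $L$: $\mathscr{R}_T(\mathscr{G})$ contains $xy|z$ for $x,y,z\in L$ if ($xy\in E(G_<)$ and $xz,yz\notin E(G_<)$) or ($xz,yz\in E(G_>)$ and $xy\notin E(G_>)$); $\mathscr{F}_T(\mathscr{G})$ contains $xz|y$ and $yz|x$ if $xz,yz\in E(G_=)$ and $xy\notin E(G_=)$; $\mathscr{R}_S(\mathscr{G})$ contains $XY|Z$ if there are $x,y,z\in L$ with pairwise distinct colors $X=\sigma(x),Y=\sigma(y),Z=\sigma(z)$ and ($xz,yz\in E(G_<)$ and $xy\notin E(G_<)$) or ($xy\in E(G_>)$ and $xz,yz\notin E(G_>)$); $\mathscr{F}_S(\mathscr{G})$ contains $XZ|Y$ and $YZ|X$ if there are $x,y,z\in L$ with pairwise distinct colors $X,Y,Z$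 as before and $xz,yz\in E(G_=)$, $xy\notin E(G_=)$. *)

theory Defs
  imports Complex_Main
begin

text \<open>A rooted tree is given by a vertex set V, a set E of directed edges (u,v) with
  u the parent of v, and the planted vertex r0 (the vertex 0_T).
  y \<preceq> x (x is an ancestor of y) iff (x,y) \<in> E^*; y \<prec> x iff (x,y) \<in> E^+.\<close>

definition children :: "('v \<times> 'v) set \<Rightarrow> 'v \<Rightarrow> 'v set" where
  "children E v = {w. (v, w) \<in> E}"

definition leaves :: "'v set \<Rightarrow> ('v \<times> 'v) set \<Rightarrow> 'v set" where
  "leaves V E = {v \<in> V. children E v = {}}"

definition planted_phylo_tree :: "'v set \<Rightarrow> ('v \<times> 'v) set \<Rightarrow> 'v \<Rightarrow> bool" where
  "planted_phylo_tree V E r0 \<longleftrightarrow>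
     finite V \<and> E \<subseteq> V \<times> V \<and> r0 \<in> V \<and>
     (\<forall>v\<in>V. (r0, v) \<in> E\<^sup>*) \<and>
     (\<forall>u. (u, r0) \<notin> E) \<and>
     (\<forall>v\<in>V - {r0}. \<exists>!u. (u, v) \<in> E) \<and>
     acyclic E \<and>
     card (children E r0) = 1 \<and>
     (\<forall>v\<in>V - {r0} - leaves V E. card (children E v) \<ge> 2)"

definition lca :: "'v set \<Rightarrow> ('v \<times> 'v) set \<Rightarrow> 'v \<Rightarrow> 'v \<Rightarrow> 'v" where
  "lca V E x y = (THE z. z \<in> V \<and> (z, x) \<in> E\<^sup>* \<and> (z, y) \<in> E\<^sup>* \<and>
      (\<forall>w\<in>V. (w, x) \<in> E\<^sup>* \<and> (w, y) \<in> E\<^sup>* \<longrightarrow> (w, z) \<in> E\<^sup>*))"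

definition time_map :: "'v set \<Rightarrow> ('v \<times> 'v) set \<Rightarrow> ('v \<Rightarrow> real) \<Rightarrow> bool" where
  "time_map V E \<tau> \<longleftrightarrow> (\<forall>x\<in>V. \<forall>y\<in>V. (y, x) \<in> E\<^sup>+ \<longrightarrow> \<tau> x < \<tau> y)"

text \<open>Relaxed scenario. The reconciliation map \<mu> takes values in V(S) (Inl v) or E(S)
  (Inr (u,v), an edge uv with v \<prec> u).\<close>
definition relaxed_scenario ::
  "'g set \<Rightarrow> ('g \<times> 'g) set \<Rightarrow> 'g \<Rightarrow> ('g \<Rightarrow> real) \<Rightarrow>
   's set \<Rightarrow> ('s \<times> 's) set \<Rightarrow> 's \<Rightarrow> ('s \<Rightarrow> real) \<Rightarrow>
   ('g \<Rightarrow> 's) \<Rightarrow> ('g \<Rightarrow> 's + ('s \<times> 's)) \<Rightarrow> bool" where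
  "relaxed_scenario VT ET rT \<tau>T VS ES rS \<tau>S \<sigma> \<mu> \<longleftrightarrow>
     planted_phylo_tree VT ET rT \<and> planted_phylo_tree VS ES rS \<and>
     time_map VT ET \<tau>T \<and> time_map VS ES \<tau>S \<and>
     (\<forall>x\<in>leaves VT ET. \<sigma> x \<in> leaves VS ES) \<and>
     (\<forall>x\<in>VT. \<mu> x \<in> Inl ` VS \<union> Inr ` ES) \<and>
     (\<forall>x\<in>VT. \<mu> x = Inl rS \<longleftrightarrow> x = rT) \<and>
     (\<forall>x\<in>VT. (\<exists>v\<in>leaves VS ES. \<mu> x = Inl v) \<longleftrightarrow> x \<in> leaves VT ET) \<and>
     (\<forall>x\<in>leaves VT ET. \<mu> x = Inl (\<sigma> x)) \<and>
     (\<forall>x\<in>VT. \<forall>v. \<mu> x = Inl v \<longrightarrow> \<tau>S v = \<tau>T x) \<and>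
     (\<forall>x\<in>VT. \<forall>u v. \<mu> x = Inr (u, v) \<longrightarrow> \<tau>S v < \<tau>T x \<and> \<tau>T x < \<tau>S u)"

definition G_rel ::
  "(real \<Rightarrow> real \<Rightarrow> bool) \<Rightarrow> 'g set \<Rightarrow> ('g \<times> 'g) set \<Rightarrow> ('g \<Rightarrow> real) \<Rightarrow>
   's set \<Rightarrow> ('s \<times> 's) set \<Rightarrow> ('s \<Rightarrow> real) \<Rightarrow> ('g \<Rightarrow> 's) \<Rightarrow> ('g \<times> 'g) set" where
  "G_rel cmp VT ET \<tau>T VS ES \<tau>S \<sigma> =
     {(x, y). x \<in> leaves VT ET \<and> y \<in> leaves VT ET \<and> x \<noteq> y \<and>
        cmp (\<tau>T (lca VT ET x y)) (\<tau>S (lca VS ES (\<sigma> x) (\<sigma> y)))}"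

abbreviation G_less where "G_less \<equiv> G_rel (<)"
abbreviation G_eq where "G_eq \<equiv> G_rel (=)"
abbreviation G_greater where "G_greater \<equiv> G_rel (>)"

text \<open>Triples xy|z are encoded as (x, y, z); triples are on pairwise distinct elements.\<close>
definition displays :: "'v set \<Rightarrow> ('v \<times> 'v) set \<Rightarrow> 'v \<times> 'v \<times> 'v \<Rightarrow> bool" where
  "displays V E t = (case t of (x, y, z) \<Rightarrow>
     (lca V E x z, lca V E x y) \<in> E\<^sup>+ \<and> lca V E x z = lca V E y z)"

definition agrees :: "'v set \<Rightarrow> ('v \<times> 'v) set \<Rightarrow> ('v \<times> 'v \<times> 'v) set \<Rightarrow> ('v \<times> 'v \<times> 'v) set \<Rightarrow> bool" where
  "agrees V E R F \<longleftrightarrow> (\<forall>t\<in>R. displays V E t) \<and> (\<forall>t\<in>F. \<not> displays V E t)"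

definition R_T :: "'g set \<Rightarrow> ('g \<times> 'g) set \<Rightarrow> ('g \<times> 'g) set \<Rightarrow> ('g \<times> 'g) set \<Rightarrow> ('g \<times> 'g \<times> 'g) set" where
  "R_T L Gl Ge Gg = {(x, y, z). x \<in> L \<and> y \<in> L \<and> z \<in> L \<and> x \<noteq> y \<and> x \<noteq> z \<and> y \<noteq> z \<and>
     (((x, y) \<in> Gl \<and> (x, z) \<notin> Gl \<and> (y, z) \<notin> Gl) \<or>
      ((x, z) \<in> Gg \<and> (y, z) \<in> Gg \<and> (x, y) \<notin> Gg))}"

definition F_T :: "'g set \<Rightarrow> ('g \<times> 'g) set \<Rightarrow> ('g \<times> 'g) set \<Rightarrow> ('g \<times> 'g) set \<Rightarrow> ('g \<times> 'g \<times> 'g) set" where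
  "F_T L Gl Ge Gg =
     {t. \<exists>x y z. x \<in> L \<and> y \<in> L \<and> z \<in> L \<and> x \<noteq> y \<and> x \<noteq> z \<and> y \<noteq> z \<and>
        (x, z) \<in> Ge \<and> (y, z) \<in> Ge \<and> (x, y) \<notin> Ge \<and> (t = (x, z, y) \<or> t = (y, z, x))}"

definition R_S :: "'g set \<Rightarrow> ('g \<times> 'g) set \<Rightarrow> ('g \<times> 'g) set \<Rightarrow> ('g \<times> 'g) set \<Rightarrow> ('g \<Rightarrow> 's) \<Rightarrow> ('s \<times> 's \<times> 's) set" where
  "R_S L Gl Ge Gg \<sigma> =
     {t. \<exists>x y z. x \<in> L \<and> y \<in> L \<and> z \<in> L \<and>
        \<sigma> x \<noteq> \<sigma> y \<and> \<sigma> x \<noteq> \<sigma> z \<and> \<sigma> y \<noteq> \<sigma> z \<and>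
        (((x, z) \<in> Gl \<and> (y, z) \<in> Gl \<and> (x, y) \<notin> Gl) \<or>
         ((x, y) \<in> Gg \<and> (x, z) \<notin> Gg \<and> (y, z) \<notin> Gg)) \<and>
        t = (\<sigma> x, \<sigma> y, \<sigma> z)}"

definition F_S :: "'g set \<Rightarrow> ('g \<times> 'g) set \<Rightarrow> ('g \<times> 'g) set \<Rightarrow> ('g \<times> 'g) set \<Rightarrow> ('g \<Rightarrow> 's) \<Rightarrow> ('s \<times> 's \<times> 's) set" where
  "F_S L Gl Ge Gg \<sigma> =
     {t. \<exists>x y z. x \<in> L \<and> y \<in> L \<and> z \<in> L \<and>
        \<sigma> x \<noteq> \<sigma> y \<and> \<sigma> x \<noteq> \<sigma> z \<and> \<sigma> y \<noteq> \<sigma> z \<and>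
        (x, z) \<in> Ge \<and> (y, z) \<in> Ge \<and> (x, y) \<notin> Ge \<and>
        (t = (\<sigma> x, \<sigma> z, \<sigma> y) \<or> t = (\<sigma> y, \<sigma> z, \<sigma> x))}"

end

theory Submission imports Defs begin

lemma pt_E: "planted_phylo_tree V E r0 \<Longrightarrow> E \<subseteq> V \<times> V"
  by (simp add: planted_phylo_tree_def)

lemma anc_V: assumes "planted_phylo_tree V E r0" "(a,b) \<in> E\<^sup>*" "b \<in> V" shows "a \<in> V"
  using assms(2,3) pt_E[OF assms(1)] by (cases rule: converse_rtranclE) auto

lemma parent_unique: assumes "planted_phylo_tree V E r0" "(p,x) \<in> E" "(q,x) \<in> E" shows "p = q"
proof -
  have "x \<in> V" using pt_E[OF assms(1)] assms(2) by auto
  moreover have "x \<noteq> r0" using assms(1,2) unfolding planted_phylo_tree_def by auto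
  ultimately have "\<exists>!u. (u,x) \<in> E" using assms(1) unfolding planted_phylo_tree_def by auto
  then show ?thesis using assms(2,3) by auto
qed

lemma anc_chain: assumes "planted_phylo_tree V E r0" "(b,x) \<in> E\<^sup>*"
  shows "(a,x) \<in> E\<^sup>* \<Longrightarrow> (a,b) \<in> E\<^sup>* \<or> (b,a) \<in> E\<^sup>*"
  using assms(2)
proof (induction arbitrary: a rule: rtrancl_induct)
  case base then show ?case by simp
next
  case (step y x')
  from step.prems show ?case
  proof (cases rule: rtranclE)
    case base then show ?thesis using step.hyps by (meson rtrancl.rtrancl_into_rtrancl)
  next
    case (step p)
    then have "p = y" using parent_unique[OF assms(1)] \<open>(y,x') \<in> E\<close> by blast
    then show ?thesis using step step.IH by auto
  qed
qed

lemma anc_antisym: assumes "planted_phylo_tree V E r0" "(a,b) \<in> E\<^sup>*" "(b,a) \<in> E\<^sup>*" shows "a = b"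
proof (rule ccontr)
  assume "a \<noteq> b"
  then have "(a,b) \<in> E\<^sup>+" "(b,a) \<in> E\<^sup>+" using assms(2,3) by (auto dest: rtranclD)
  then have "(a,a) \<in> E\<^sup>+" by simp
  then show False using assms(1) unfolding planted_phylo_tree_def acyclic_def by auto
qed

lemma lca_props:
  assumes P: "planted_phylo_tree V E r0" and tm: "time_map V E \<tau>" and xy: "x \<in> V" "y \<in> V"
  shows "lca V E x y \<in> V \<and> (lca V E x y, x) \<in> E\<^sup>* \<and> (lca V E x y, y) \<in> E\<^sup>* \<and>
     (\<forall>w\<in>V. (w, x) \<in> E\<^sup>* \<and> (w, y) \<in> E\<^sup>* \<longrightarrow> (w, lca V E x y) \<in> E\<^sup>*)"
proof -
  define C where "C = {z \<in> V. (z, x) \<in> E\<^sup>* \<and> (z, y) \<in> E\<^sup>*}"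
  have fin: "finite C" using P unfolding C_def planted_phylo_tree_def by auto
  have "r0 \<in> C" using P xy unfolding C_def planted_phylo_tree_def by auto
  then have ne: "C \<noteq> {}" by auto
  define m where "m = Min (\<tau> ` C)"
  have "m \<in> \<tau> ` C" using fin ne unfolding m_def by simp
  then obtain z where zC: "z \<in> C" and zm: "\<tau> z = m" by auto
  have low: "(w, z) \<in> E\<^sup>*" if "w \<in> C" for w
  proof -
    have "(w,z) \<in> E\<^sup>* \<or> (z,w) \<in> E\<^sup>*" using anc_chain[OF P, of z x w] zC that unfolding C_def by auto
    moreover have "(z,w) \<notin> E\<^sup>+"
    proof
      assume "(z,w) \<in> E\<^sup>+"
      then have "\<tau> w < \<tau> z" using tm zC that unfolding time_map_def C_def by auto
      moreover have "m \<le> \<tau> w" using fin that unfolding m_def by simp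
      ultimately show False using zm by simp
    qed
    ultimately show ?thesis by (auto dest: rtranclD)
  qed
  have "lca V E x y = z"
    unfolding lca_def
  proof (rule the_equality)
    show "z \<in> V \<and> (z, x) \<in> E\<^sup>* \<and> (z, y) \<in> E\<^sup>* \<and> (\<forall>w\<in>V. (w, x) \<in> E\<^sup>* \<and> (w, y) \<in> E\<^sup>* \<longrightarrow> (w, z) \<in> E\<^sup>*)"
      using zC low unfolding C_def by auto
  next
    fix z' assume "z' \<in> V \<and> (z', x) \<in> E\<^sup>* \<and> (z', y) \<in> E\<^sup>* \<and> (\<forall>w\<in>V. (w, x) \<in> E\<^sup>* \<and> (w, y) \<in> E\<^sup>* \<longrightarrow> (w, z') \<in> E\<^sup>*)"
    then show "z' = z" using zC low[of z'] anc_antisym[OF P, of z' z] unfolding C_def by auto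
  qed
  then show ?thesis using zC low unfolding C_def by auto
qed

lemma lca_sym: "lca V E x y = lca V E y x"
  unfolding lca_def by (simp add: conj_commute conj_left_commute)


lemma tri:
  assumes P: "planted_phylo_tree V E r0" and tm: "time_map V E \<tau>" and V: "x \<in> V" "y \<in> V" "z \<in> V"
  defines "u \<equiv> lca V E x y" and "v \<equiv> lca V E x z" and "w \<equiv> lca V E y z"
  shows "(u = v \<and> v = w) \<or> ((v,u) \<in> E\<^sup>+ \<and> v = w \<and> \<tau> u < \<tau> v)
     \<or> ((u,v) \<in> E\<^sup>+ \<and> u = w \<and> \<tau> v < \<tau> u) \<or> ((u,w) \<in> E\<^sup>+ \<and> u = v \<and> \<tau> w < \<tau> u)"
proof -
  note U = lca_props[OF P tm V(1) V(2), folded u_def]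
  note Vv = lca_props[OF P tm V(1) V(3), folded v_def]
  note W = lca_props[OF P tm V(2) V(3), folded w_def]
  have tmE: "\<And>a b. a \<in> V \<Longrightarrow> b \<in> V \<Longrightarrow> (a,b) \<in> E\<^sup>+ \<Longrightarrow> \<tau> b < \<tau> a"
    using tm unfolding time_map_def by auto
  have ne: "\<And>a b. (a,b) \<in> E\<^sup>* \<Longrightarrow> a \<noteq> b \<Longrightarrow> (a,b) \<in> E\<^sup>+" by (auto dest: rtranclD)
  have tr: "\<And>a b c. (a,b) \<in> E\<^sup>* \<Longrightarrow> (b,c) \<in> E\<^sup>* \<Longrightarrow> (a,c) \<in> E\<^sup>*" by (meson rtrancl_trans)
  have as: "\<And>a b. (a,b) \<in> E\<^sup>* \<Longrightarrow> (b,a) \<in> E\<^sup>* \<Longrightarrow> a = b" using anc_antisym[OF P] by blast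
  have "(u,v) \<in> E\<^sup>* \<or> (v,u) \<in> E\<^sup>*" using anc_chain[OF P, of v x u] U Vv by auto
  then have cases: "(u = v \<and> v = w) \<or> ((v,u) \<in> E\<^sup>+ \<and> v = w)
     \<or> ((u,v) \<in> E\<^sup>+ \<and> u = w) \<or> ((u,w) \<in> E\<^sup>+ \<and> u = v)"
  proof
    assume uv: "(u,v) \<in> E\<^sup>*"
    have uw: "(u,w) \<in> E\<^sup>*" using U Vv W uv tr by blast
    have "(w,v) \<in> E\<^sup>* \<or> (v,w) \<in> E\<^sup>*" using anc_chain[OF P, of v z w] Vv W by auto
    then show ?thesis
    proof
      assume "(w,v) \<in> E\<^sup>*"
      then have "(w,u) \<in> E\<^sup>*" using U W Vv tr by blast
      then have "u = w" using uw as by blast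
      then show ?thesis using uv ne[of u v] by auto
    next
      assume "(v,w) \<in> E\<^sup>*"
      then have "(v,u) \<in> E\<^sup>*" using U W Vv tr by blast
      then have "u = v" using uv as by blast
      then show ?thesis using uw ne[of u w] by auto
    qed
  next
    assume vu: "(v,u) \<in> E\<^sup>*"
    have vw: "(v,w) \<in> E\<^sup>*" using U Vv W vu tr by blast
    have "(w,u) \<in> E\<^sup>* \<or> (u,w) \<in> E\<^sup>*" using anc_chain[OF P, of u y w] U W by auto
    then show ?thesis
    proof
      assume "(w,u) \<in> E\<^sup>*"
      then have "(w,v) \<in> E\<^sup>*" using U W Vv tr by blast
      then have "v = w" using vw as by blast
      then show ?thesis using vu ne[of v u] by auto
    next
      assume "(u,w) \<in> E\<^sup>*"
      then have "(u,v) \<in> E\<^sup>*" using U W Vv tr by blast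
      then have "u = v" using vu as by blast
      then show ?thesis using vw ne[of v w] by auto
    qed
  qed
  have "u \<in> V" "v \<in> V" "w \<in> V" using U Vv W by auto
  then show ?thesis using cases tmE[of v u] tmE[of u v] tmE[of u w] by auto
qed


lemma disp_time:
  assumes P: "planted_phylo_tree V E r0" and tm: "time_map V E \<tau>" and V: "x \<in> V" "y \<in> V" "z \<in> V"
    and d: "displays V E (x,y,z)"
  shows "\<tau> (lca V E x y) < \<tau> (lca V E x z) \<and> lca V E x z = lca V E y z"
proof -
  have "lca V E x y \<in> V" "lca V E x z \<in> V" using lca_props[OF P tm] V by auto
  then show ?thesis using d tm unfolding displays_def time_map_def by auto
qed


lemma tri_ultra:
  assumes P: "planted_phylo_tree V E r0" and tm: "time_map V E \<tau>" and V: "x \<in> V" "y \<in> V" "z \<in> V"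
  shows "(\<tau> (lca V E x y) = \<tau> (lca V E x z) \<and> \<tau> (lca V E x z) = \<tau> (lca V E y z)) \<or>
         (\<tau> (lca V E x y) < \<tau> (lca V E x z) \<and> \<tau> (lca V E x z) = \<tau> (lca V E y z)) \<or>
         (\<tau> (lca V E x z) < \<tau> (lca V E x y) \<and> \<tau> (lca V E x y) = \<tau> (lca V E y z)) \<or>
         (\<tau> (lca V E y z) < \<tau> (lca V E x y) \<and> \<tau> (lca V E x y) = \<tau> (lca V E x z))"
  using tri[OF P tm V] by metis

lemma tri_disp:
  assumes P: "planted_phylo_tree V E r0" and tm: "time_map V E \<tau>" and V: "x \<in> V" "y \<in> V" "z \<in> V"
  shows "displays V E (x,y,z) \<or> (\<tau> (lca V E x y) = \<tau> (lca V E x z) \<and> \<tau> (lca V E x z) = \<tau> (lca V E y z)) \<or>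
         (\<tau> (lca V E x z) < \<tau> (lca V E x y) \<and> \<tau> (lca V E x y) = \<tau> (lca V E y z)) \<or>
         (\<tau> (lca V E y z) < \<tau> (lca V E x y) \<and> \<tau> (lca V E x y) = \<tau> (lca V E x z))"
  using tri[OF P tm V] unfolding displays_def by (elim disjE conjE) simp_all

theorem proposition2:
  fixes VT :: "'g set" and ET :: "('g \<times> 'g) set" and rT :: 'g and \<tau>T :: "'g \<Rightarrow> real"
    and VS :: "'s set" and ES :: "('s \<times> 's) set" and rS :: 's and \<tau>S :: "'s \<Rightarrow> real"
    and \<sigma> :: "'g \<Rightarrow> 's" and \<mu> :: "'g \<Rightarrow> 's + ('s \<times> 's)"
  assumes "relaxed_scenario VT ET rT \<tau>T VS ES rS \<tau>S \<sigma> \<mu>"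
  defines "L \<equiv> leaves VT ET"
    and "Gl \<equiv> G_less VT ET \<tau>T VS ES \<tau>S \<sigma>"
    and "Ge \<equiv> G_eq VT ET \<tau>T VS ES \<tau>S \<sigma>"
    and "Gg \<equiv> G_greater VT ET \<tau>T VS ES \<tau>S \<sigma>"
  shows "agrees VT ET (R_T L Gl Ge Gg) (F_T L Gl Ge Gg)
       \<and> agrees VS ES (R_S L Gl Ge Gg \<sigma>) (F_S L Gl Ge Gg \<sigma>)"
proof -
  have PT: "planted_phylo_tree VT ET rT" and PS: "planted_phylo_tree VS ES rS"
    and tT: "time_map VT ET \<tau>T" and tS: "time_map VS ES \<tau>S"
    and lf: "\<forall>x\<in>L. \<sigma> x \<in> leaves VS ES"
    using assms(1) unfolding relaxed_scenario_def L_def by auto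
  have LV: "\<And>x. x \<in> L \<Longrightarrow> x \<in> VT" unfolding L_def leaves_def by auto
  have LS: "\<And>x. x \<in> L \<Longrightarrow> \<sigma> x \<in> VS" using lf unfolding leaves_def by auto
  have Gl: "\<And>x y. x \<in> L \<Longrightarrow> y \<in> L \<Longrightarrow> x \<noteq> y \<Longrightarrow> (x,y) \<in> Gl \<longleftrightarrow>
      \<tau>T (lca VT ET x y) < \<tau>S (lca VS ES (\<sigma> x) (\<sigma> y))"
    unfolding Gl_def G_rel_def L_def by auto
  have Ge: "\<And>x y. x \<in> L \<Longrightarrow> y \<in> L \<Longrightarrow> x \<noteq> y \<Longrightarrow> (x,y) \<in> Ge \<longleftrightarrow>
      \<tau>T (lca VT ET x y) = \<tau>S (lca VS ES (\<sigma> x) (\<sigma> y))"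
    unfolding Ge_def G_rel_def L_def by auto
  have Gg: "\<And>x y. x \<in> L \<Longrightarrow> y \<in> L \<Longrightarrow> x \<noteq> y \<Longrightarrow> (x,y) \<in> Gg \<longleftrightarrow>
      \<tau>T (lca VT ET x y) > \<tau>S (lca VS ES (\<sigma> x) (\<sigma> y))"
    unfolding Gg_def G_rel_def L_def by auto
  have Gdist: "\<And>x y. (x,y) \<in> Ge \<Longrightarrow> x \<noteq> y" "\<And>x y. (x,y) \<in> Gl \<Longrightarrow> x \<noteq> y" "\<And>x y. (x,y) \<in> Gg \<Longrightarrow> x \<noteq> y"
    unfolding Ge_def Gl_def Gg_def G_rel_def by auto
  have GL: "\<And>x y. (x,y) \<in> Ge \<Longrightarrow> x \<in> L \<and> y \<in> L" "\<And>x y. (x,y) \<in> Gl \<Longrightarrow> x \<in> L \<and> y \<in> L"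
     "\<And>x y. (x,y) \<in> Gg \<Longrightarrow> x \<in> L \<and> y \<in> L"
    unfolding Ge_def Gl_def Gg_def G_rel_def L_def by auto
  have triT: "\<And>x y z. x \<in> L \<Longrightarrow> y \<in> L \<Longrightarrow> z \<in> L \<Longrightarrow>
      (\<tau>T (lca VT ET x y) = \<tau>T (lca VT ET x z) \<and> \<tau>T (lca VT ET x z) = \<tau>T (lca VT ET y z)) \<or>
         (\<tau>T (lca VT ET x y) < \<tau>T (lca VT ET x z) \<and> \<tau>T (lca VT ET x z) = \<tau>T (lca VT ET y z)) \<or>
         (\<tau>T (lca VT ET x z) < \<tau>T (lca VT ET x y) \<and> \<tau>T (lca VT ET x y) = \<tau>T (lca VT ET y z)) \<or>
         (\<tau>T (lca VT ET y z) < \<tau>T (lca VT ET x y) \<and> \<tau>T (lca VT ET x y) = \<tau>T (lca VT ET x z))"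
    using tri_ultra[OF PT tT] LV by blast
  have triS: "\<And>x y z. x \<in> L \<Longrightarrow> y \<in> L \<Longrightarrow> z \<in> L \<Longrightarrow>
      (\<tau>S (lca VS ES (\<sigma> x) (\<sigma> y)) = \<tau>S (lca VS ES (\<sigma> x) (\<sigma> z)) \<and> \<tau>S (lca VS ES (\<sigma> x) (\<sigma> z)) = \<tau>S (lca VS ES (\<sigma> y) (\<sigma> z))) \<or>
         (\<tau>S (lca VS ES (\<sigma> x) (\<sigma> y)) < \<tau>S (lca VS ES (\<sigma> x) (\<sigma> z)) \<and> \<tau>S (lca VS ES (\<sigma> x) (\<sigma> z)) = \<tau>S (lca VS ES (\<sigma> y) (\<sigma> z))) \<or>
         (\<tau>S (lca VS ES (\<sigma> x) (\<sigma> z)) < \<tau>S (lca VS ES (\<sigma> x) (\<sigma> y)) \<and> \<tau>S (lca VS ES (\<sigma> x) (\<sigma> y)) = \<tau>S (lca VS ES (\<sigma> y) (\<sigma> z))) \<or>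
         (\<tau>S (lca VS ES (\<sigma> y) (\<sigma> z)) < \<tau>S (lca VS ES (\<sigma> x) (\<sigma> y)) \<and> \<tau>S (lca VS ES (\<sigma> x) (\<sigma> y)) = \<tau>S (lca VS ES (\<sigma> x) (\<sigma> z)))"
    using tri_ultra[OF PS tS] LS by blast
  have dispT: "\<And>x y z. x \<in> L \<Longrightarrow> y \<in> L \<Longrightarrow> z \<in> L \<Longrightarrow>
      displays VT ET (x,y,z) \<or> (\<tau>T (lca VT ET x y) = \<tau>T (lca VT ET x z) \<and> \<tau>T (lca VT ET x z) = \<tau>T (lca VT ET y z)) \<or>
         (\<tau>T (lca VT ET x z) < \<tau>T (lca VT ET x y) \<and> \<tau>T (lca VT ET x y) = \<tau>T (lca VT ET y z)) \<or>
         (\<tau>T (lca VT ET y z) < \<tau>T (lca VT ET x y) \<and> \<tau>T (lca VT ET x y) = \<tau>T (lca VT ET x z))"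
    using tri_disp[OF PT tT] LV by blast
  have dispS: "\<And>x y z. x \<in> L \<Longrightarrow> y \<in> L \<Longrightarrow> z \<in> L \<Longrightarrow>
      displays VS ES (\<sigma> x,\<sigma> y,\<sigma> z) \<or> (\<tau>S (lca VS ES (\<sigma> x) (\<sigma> y)) = \<tau>S (lca VS ES (\<sigma> x) (\<sigma> z)) \<and> \<tau>S (lca VS ES (\<sigma> x) (\<sigma> z)) = \<tau>S (lca VS ES (\<sigma> y) (\<sigma> z))) \<or>
         (\<tau>S (lca VS ES (\<sigma> x) (\<sigma> z)) < \<tau>S (lca VS ES (\<sigma> x) (\<sigma> y)) \<and> \<tau>S (lca VS ES (\<sigma> x) (\<sigma> y)) = \<tau>S (lca VS ES (\<sigma> y) (\<sigma> z))) \<or>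
         (\<tau>S (lca VS ES (\<sigma> y) (\<sigma> z)) < \<tau>S (lca VS ES (\<sigma> x) (\<sigma> y)) \<and> \<tau>S (lca VS ES (\<sigma> x) (\<sigma> y)) = \<tau>S (lca VS ES (\<sigma> x) (\<sigma> z)))"
    using tri_disp[OF PS tS] LS by blast
  have dT: "\<And>x y z. x \<in> L \<Longrightarrow> y \<in> L \<Longrightarrow> z \<in> L \<Longrightarrow> displays VT ET (x,y,z) \<Longrightarrow>
      \<tau>T (lca VT ET x y) < \<tau>T (lca VT ET x z) \<and> lca VT ET x z = lca VT ET y z"
    using disp_time[OF PT tT] LV by blast
  have dS: "\<And>x y z. x \<in> L \<Longrightarrow> y \<in> L \<Longrightarrow> z \<in> L \<Longrightarrow> displays VS ES (\<sigma> x,\<sigma> y,\<sigma> z) \<Longrightarrow>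
      \<tau>S (lca VS ES (\<sigma> x) (\<sigma> y)) < \<tau>S (lca VS ES (\<sigma> x) (\<sigma> z)) \<and> lca VS ES (\<sigma> x) (\<sigma> z) = lca VS ES (\<sigma> y) (\<sigma> z)"
    using disp_time[OF PS tS] LS by blast
  have symT: "\<And>a b. lca VT ET a b = lca VT ET b a" and symS: "\<And>a b. lca VS ES a b = lca VS ES b a"
    by (rule lca_sym)+
  have A1: "displays VT ET t" if tin: "t \<in> R_T L Gl Ge Gg" for t
  proof -
    obtain x y z where t: "t = (x,y,z)" and L: "x \<in> L" "y \<in> L" "z \<in> L" "x \<noteq> y" "x \<noteq> z" "y \<noteq> z"
      and c: "((x, y) \<in> Gl \<and> (x, z) \<notin> Gl \<and> (y, z) \<notin> Gl) \<or> ((x, z) \<in> Gg \<and> (y, z) \<in> Gg \<and> (x, y) \<notin> Gg)"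
      using tin unfolding R_T_def by (cases t) auto
    have c': "(\<tau>T (lca VT ET x y) < \<tau>S (lca VS ES (\<sigma> x) (\<sigma> y)) \<and>
        \<not> \<tau>T (lca VT ET x z) < \<tau>S (lca VS ES (\<sigma> x) (\<sigma> z)) \<and> \<not> \<tau>T (lca VT ET y z) < \<tau>S (lca VS ES (\<sigma> y) (\<sigma> z))) \<or>
       (\<tau>T (lca VT ET x z) > \<tau>S (lca VS ES (\<sigma> x) (\<sigma> z)) \<and>
        \<tau>T (lca VT ET y z) > \<tau>S (lca VS ES (\<sigma> y) (\<sigma> z)) \<and> \<not> \<tau>T (lca VT ET x y) > \<tau>S (lca VS ES (\<sigma> x) (\<sigma> y)))"
      using c Gl Gg L by simp
    show ?thesis using dispT[OF L(1-3)] triS[OF L(1-3)] c' unfolding t by (elim disjE conjE; linarith)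
  qed
  have B2: "\<not> displays VT ET (x,z,y)" if L: "x \<in> L" "y \<in> L" "z \<in> L" "x \<noteq> y" "x \<noteq> z" "y \<noteq> z"
      and c: "(x,z) \<in> Ge" "(y,z) \<in> Ge" "(x,y) \<notin> Ge" for x y z
  proof
    assume "displays VT ET (x,z,y)"
    from dT[OF L(1) L(3) L(2) this] have d: "\<tau>T (lca VT ET x z) < \<tau>T (lca VT ET x y)"
      "lca VT ET x y = lca VT ET y z" using symT[of z y] by auto
    have c': "\<tau>T (lca VT ET x z) = \<tau>S (lca VS ES (\<sigma> x) (\<sigma> z))" "\<tau>T (lca VT ET y z) = \<tau>S (lca VS ES (\<sigma> y) (\<sigma> z))"
      "\<tau>T (lca VT ET x y) \<noteq> \<tau>S (lca VS ES (\<sigma> x) (\<sigma> y))" using c Ge L by auto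
    have d2: "\<tau>T (lca VT ET x y) = \<tau>T (lca VT ET y z)" using d by simp
    show False using triT[OF L(1-3)] triS[OF L(1-3)] c' d(1) d2 by (elim disjE conjE; linarith)
  qed
  have B4: "\<not> displays VS ES (\<sigma> x,\<sigma> z,\<sigma> y)" if L: "x \<in> L" "y \<in> L" "z \<in> L" "x \<noteq> y" "x \<noteq> z" "y \<noteq> z"
      and c: "(x,z) \<in> Ge" "(y,z) \<in> Ge" "(x,y) \<notin> Ge" for x y z
  proof
    assume "displays VS ES (\<sigma> x,\<sigma> z,\<sigma> y)"
    from dS[OF L(1) L(3) L(2) this] have d: "\<tau>S (lca VS ES (\<sigma> x) (\<sigma> z)) < \<tau>S (lca VS ES (\<sigma> x) (\<sigma> y))"
      "lca VS ES (\<sigma> x) (\<sigma> y) = lca VS ES (\<sigma> y) (\<sigma> z)" using symS[of "\<sigma> z" "\<sigma> y"] by auto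
    have c': "\<tau>T (lca VT ET x z) = \<tau>S (lca VS ES (\<sigma> x) (\<sigma> z))" "\<tau>T (lca VT ET y z) = \<tau>S (lca VS ES (\<sigma> y) (\<sigma> z))"
      "\<tau>T (lca VT ET x y) \<noteq> \<tau>S (lca VS ES (\<sigma> x) (\<sigma> y))" using c Ge L by auto
    have d2: "\<tau>S (lca VS ES (\<sigma> x) (\<sigma> y)) = \<tau>S (lca VS ES (\<sigma> y) (\<sigma> z))" using d by simp
    show False using triT[OF L(1-3)] triS[OF L(1-3)] c' d(1) d2 by (elim disjE conjE; linarith)
  qed
  have Gesym: "\<And>x y. (x,y) \<in> Ge \<longleftrightarrow> (y,x) \<in> Ge"
    unfolding Ge_def G_rel_def using symT symS by auto
  have A2: "\<not> displays VT ET t" if tin: "t \<in> F_T L Gl Ge Gg" for t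
  proof -
    obtain x y z where L: "x \<in> L" "y \<in> L" "z \<in> L" "x \<noteq> y" "x \<noteq> z" "y \<noteq> z"
      and c: "(x,z) \<in> Ge" "(y,z) \<in> Ge" "(x,y) \<notin> Ge" and t: "t = (x,z,y) \<or> t = (y,z,x)"
      using tin unfolding F_T_def by blast
    have "(y,x) \<notin> Ge" using c Gesym by blast
    then show ?thesis using t B2[OF L c] B2[OF L(2) L(1) L(3) _ L(6) L(5) c(2) c(1)] L(4) by auto
  qed
  have A4: "\<not> displays VS ES t" if tin: "t \<in> F_S L Gl Ge Gg \<sigma>" for t
  proof -
    obtain x y z where L: "x \<in> L" "y \<in> L" "z \<in> L" and d: "\<sigma> x \<noteq> \<sigma> y" "\<sigma> x \<noteq> \<sigma> z" "\<sigma> y \<noteq> \<sigma> z"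
      and c: "(x,z) \<in> Ge" "(y,z) \<in> Ge" "(x,y) \<notin> Ge" and t: "t = (\<sigma> x,\<sigma> z,\<sigma> y) \<or> t = (\<sigma> y,\<sigma> z,\<sigma> x)"
      using tin unfolding F_S_def by blast
    have L': "x \<noteq> y" "x \<noteq> z" "y \<noteq> z" using d by auto
    have "(y,x) \<notin> Ge" using c Gesym by blast
    then show ?thesis using t B4[OF L L' c] B4[OF L(2) L(1) L(3) _ L'(3) L'(2) c(2) c(1)] L'(1) by auto
  qed
  have A3: "displays VS ES t" if tin: "t \<in> R_S L Gl Ge Gg \<sigma>" for t
  proof -
    obtain x y z where L: "x \<in> L" "y \<in> L" "z \<in> L" and d: "\<sigma> x \<noteq> \<sigma> y" "\<sigma> x \<noteq> \<sigma> z" "\<sigma> y \<noteq> \<sigma> z"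
      and c: "((x, z) \<in> Gl \<and> (y, z) \<in> Gl \<and> (x, y) \<notin> Gl) \<or> ((x, y) \<in> Gg \<and> (x, z) \<notin> Gg \<and> (y, z) \<notin> Gg)"
      and t: "t = (\<sigma> x, \<sigma> y, \<sigma> z)"
      using tin unfolding R_S_def by blast
    have L': "x \<noteq> y" "x \<noteq> z" "y \<noteq> z" using d by auto
    have c': "(\<tau>T (lca VT ET x z) < \<tau>S (lca VS ES (\<sigma> x) (\<sigma> z)) \<and>
        \<tau>T (lca VT ET y z) < \<tau>S (lca VS ES (\<sigma> y) (\<sigma> z)) \<and> \<not> \<tau>T (lca VT ET x y) < \<tau>S (lca VS ES (\<sigma> x) (\<sigma> y))) \<or>
       (\<tau>T (lca VT ET x y) > \<tau>S (lca VS ES (\<sigma> x) (\<sigma> y)) \<and>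
        \<not> \<tau>T (lca VT ET x z) > \<tau>S (lca VS ES (\<sigma> x) (\<sigma> z)) \<and> \<not> \<tau>T (lca VT ET y z) > \<tau>S (lca VS ES (\<sigma> y) (\<sigma> z)))"
      using c Gl Gg L L' by simp
    show ?thesis using triT[OF L(1-3)] dispS[OF L(1-3)] c' unfolding t by (elim disjE conjE; linarith)
  qed
  show ?thesis unfolding agrees_def using A1 A2 A3 A4 by blast
qed

end
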